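(* Let $X$ be a universally octahedral real Banach space. Then for every $\varepsilon>0$, every finite dimensional subspace $Z$ of $X$ and every $n\in\mathbb N$ there exists a linear operator $T:\ell_\infty^n\to X$ with $\|T\|\le 1$ such that $$\|z+T(y)\|\ge(1-\varepsilon)(\|z\|+\|y\|)$$ for every $y\in\ell_\infty^n$ and every $z\in Z$. (In fact it suffices to assume that $L(\ell_p^n,X)$ is octahedral for every $n\in\mathbb N$ and every $1<p<\infty$.)
   Context: All Banach spaces are real. $L(Y,X)$ denotes the space of bounded linear operators from $Y$ to $X$ with the operator norm. A Banach space $W$ is octahedral if for every finite dimensional subspace $E$ of $W$ and every $\varepsilon>0$ there exists $y\in W$, $\|y\|=1$, with $\|x+\lambda y\|\ge(1-\varepsilon)(\|x\|+|\lambda|)$ for all $x\in E$, $\lambda\in\mathbb R$. A Banach space $X$ is universally octahedral if $L(Y,X)$ is octahedral for every non-zero Banach space $Y$. $\ell_p^n$ is $\mathbb R^n$ with the $p$-norm. *)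

theory Defs
  imports "HOL-Analysis.Analysis"
begin

definition lp_norm :: "real \<Rightarrow> nat \<Rightarrow> (nat \<Rightarrow> real) \<Rightarrow> real" where
  "lp_norm p n a = (\<Sum>i<n. \<bar>a i\<bar> powr p) powr (1 / p)"

text \<open>An operator T : l_p^n -> X is represented by the images x i = T e_i (i < n),
  with x i = 0 for i >= n. Its operator norm:\<close>
definition lp_opnorm :: "real \<Rightarrow> nat \<Rightarrow> (nat \<Rightarrow> 'a::real_normed_vector) \<Rightarrow> real" where
  "lp_opnorm p n x = (SUP a \<in> {a. lp_norm p n a \<le> 1}. norm (\<Sum>i<n. a i *\<^sub>R x i))"

text \<open>Carrier of L(l_p^n, X) in this representation.\<close>
definition Lspace :: "nat \<Rightarrow> (nat \<Rightarrow> 'a::real_normed_vector) set" where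
  "Lspace n = {x. \<forall>i\<ge>n. x i = 0}"

text \<open>L(l_p^n, X) is octahedral: for every finite dimensional subspace E (spanned by
  B 0, ..., B (k-1)) and every eps > 0 there is a norm one y with
  ||x + l y|| >= (1 - eps)(||x|| + |l|) for all x in E and real l.\<close>
definition octahedral_Lp :: "'a::real_normed_vector itself \<Rightarrow> real \<Rightarrow> nat \<Rightarrow> bool" where
  "octahedral_Lp (_::'a itself) p n \<longleftrightarrow>
     (\<forall>(k::nat) (B :: nat \<Rightarrow> nat \<Rightarrow> 'a) (\<epsilon>::real).
        \<epsilon> > 0 \<and> (\<forall>j<k. B j \<in> Lspace n) \<longrightarrow>
        (\<exists>y \<in> Lspace n. lp_opnorm p n y = 1 \<and>
           (\<forall>(c :: nat \<Rightarrow> real) (l::real).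
              lp_opnorm p n (\<lambda>i. (\<Sum>j<k. c j *\<^sub>R B j i) + l *\<^sub>R y i)
                \<ge> (1 - \<epsilon>) * (lp_opnorm p n (\<lambda>i. \<Sum>j<k. c j *\<^sub>R B j i) + \<bar>l\<bar>))))"

definition linf_norm :: "real ^ 'n::finite \<Rightarrow> real" where
  "linf_norm y = Max (range (\<lambda>i. \<bar>y $ i\<bar>))"

end

theory Submission
  imports Defs
begin

lemma odd_pow_strict_mono:
  fixes x y :: real
  assumes "x < y" shows "x ^ Suc (2*m) < y ^ Suc (2*m)"
proof (cases "0 \<le> x")
  case True then show ?thesis using assms by (intro power_strict_mono) auto
next
  case False
  show ?thesis
  proof (cases "y \<le> 0")
    case True
    have "(-y) ^ Suc (2*m) < (-x) ^ Suc (2*m)" using assms True by (intro power_strict_mono) auto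
    then show ?thesis by (simp add: power_minus_odd)
  next
    case False
    have "x ^ Suc (2*m) < 0" using \<open>\<not> 0 \<le> x\<close> by (intro odd_power_less_zero) auto
    moreover have "0 < y ^ Suc (2*m)" using False by simp
    ultimately show ?thesis by simp
  qed
qed

lemma tangent_strict:
  fixes x t :: real
  assumes "m \<ge> 1" "t \<noteq> x"
  shows "x ^ (2*m) + real (2*m) * x ^ (2*m-1) * (t - x) < t ^ (2*m)"
proof -
  define p where "p = 2*m"
  have pm: "p - 1 = Suc (2*(m-1))" using assms unfolding p_def by auto
  have der: "\<And>z. DERIV (\<lambda>s. s ^ p) z :> real p * z ^ (p-1)"
    by (auto intro!: derivative_eq_intros)
  show ?thesis
  proof (cases "x < t")
    case True
    obtain z where z: "x < z" "z < t" "t ^ p - x ^ p = (t - x) * (real p * z ^ (p-1))"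
      using MVT2[OF True, of "\<lambda>s. s ^ p" "\<lambda>z. real p * z ^ (p-1)"] der by blast
    have "x ^ (p-1) < z ^ (p-1)" unfolding pm using z(1) by (rule odd_pow_strict_mono)
    then have "(t - x) * (real p * x ^ (p-1)) < (t - x) * (real p * z ^ (p-1))"
      using True assms unfolding p_def by (intro mult_strict_left_mono) auto
    then show ?thesis using z(3) unfolding p_def[symmetric] by (simp add: algebra_simps)
  next
    case False
    then have lt: "t < x" using assms by auto
    obtain z where z: "t < z" "z < x" "x ^ p - t ^ p = (x - t) * (real p * z ^ (p-1))"
      using MVT2[OF lt, of "\<lambda>s. s ^ p" "\<lambda>z. real p * z ^ (p-1)"] der by blast
    have "z ^ (p-1) < x ^ (p-1)" unfolding pm using z(2) by (rule odd_pow_strict_mono)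
    then have "(x - t) * (real p * z ^ (p-1)) < (x - t) * (real p * x ^ (p-1))"
      using lt assms unfolding p_def by (intro mult_strict_left_mono) auto
    then show ?thesis using z(3) unfolding p_def[symmetric] by (simp add: algebra_simps)
  qed
qed

lemma tangent:
  fixes x t :: real
  assumes "m \<ge> 1"
  shows "x ^ (2*m) + real (2*m) * x ^ (2*m-1) * (t - x) \<le> t ^ (2*m)"
  using tangent_strict[OF assms, of t x] by (cases "t = x") auto

definition hy :: "nat \<Rightarrow> real \<Rightarrow> real \<Rightarrow> real" where
  "hy p x t = (real p - 1) / real p * x ^ p + t ^ p / real p - x ^ (p-1) * t"

lemma hy_scaled:
  assumes "m \<ge> 1"
  shows "real (2*m) * hy (2*m) x t = t ^ (2*m) - (x ^ (2*m) + real (2*m) * x ^ (2*m-1) * (t - x))"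
proof -
  have e: "x ^ (2*m-1) * x = x ^ (2*m)"
  proof -
    have "2*m = Suc (2*m-1)" using assms by simp
    then show ?thesis by (metis power_Suc2)
  qed
  have p0: "real (2*m) \<noteq> 0" using assms by simp
  have "real (2*m) * hy (2*m) x t = (real (2*m) - 1) * x ^ (2*m) + t ^ (2*m) - real (2*m) * (x ^ (2*m-1) * t)"
    unfolding hy_def using p0 by (simp add: distrib_left right_diff_distrib)
  also have "\<dots> = t ^ (2*m) - (x ^ (2*m) + real (2*m) * x ^ (2*m-1) * (t - x))"
    using e by (simp add: algebra_simps)
  finally show ?thesis .
qed

lemma hy_nonneg: assumes "m \<ge> 1" shows "0 \<le> hy (2*m) x t"
proof -
  have "0 \<le> real (2*m) * hy (2*m) x t" using tangent[OF assms, of x t] hy_scaled[OF assms, of x t] by simp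
  then show ?thesis using assms by (simp add: zero_le_mult_iff)
qed

lemma hy_pos: assumes "m \<ge> 1" "t \<noteq> x" shows "0 < hy (2*m) x t"
proof -
  have "0 < real (2*m) * hy (2*m) x t" using tangent_strict[OF assms] hy_scaled[OF assms(1), of x t] by simp
  then show ?thesis using assms by (simp add: zero_less_mult_iff)
qed

lemma hy_cont: "p > 0 \<Longrightarrow> continuous_on S (\<lambda>z::real\<times>real. hy p (fst z) (snd z))"
  unfolding hy_def by (intro continuous_intros) auto

lemma hy_unif:
  assumes "m \<ge> 1" "\<rho> > 0"
  shows "\<exists>c>0. \<forall>x t. \<bar>x\<bar> \<le> 1 \<longrightarrow> \<bar>t\<bar> \<le> 1 \<longrightarrow> \<rho> \<le> \<bar>t - x\<bar> \<longrightarrow> c \<le> hy (2*m) x t"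
proof -
  define C where "C = {z::real\<times>real. \<bar>fst z\<bar> \<le> 1 \<and> \<bar>snd z\<bar> \<le> 1 \<and> \<rho> \<le> \<bar>snd z - fst z\<bar>}"
  have cl: "closed C" unfolding C_def
    by (intro closed_Collect_conj closed_Collect_le continuous_intros)
  have bd: "bounded C"
  proof -
    have "C \<subseteq> {-1..1} \<times> {-1..1}" unfolding C_def by auto
    moreover have "bounded ({-1..1::real} \<times> {-1..1::real})" by (intro bounded_Times) auto
    ultimately show ?thesis using bounded_subset by blast
  qed
  have cp: "compact C" using cl bd compact_eq_bounded_closed by blast
  show ?thesis
  proof (cases "C = {}")
    case True
    show ?thesis by (rule exI[of _ 1]) (use True in \<open>auto simp: C_def\<close>)
  next
    case False
    have hc: "continuous_on C (\<lambda>z::real\<times>real. hy (2*m) (fst z) (snd z))"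
      by (rule hy_cont) (use assms(1) in simp)
    obtain z0 where z0: "z0 \<in> C" "\<forall>z\<in>C. hy (2*m) (fst z0) (snd z0) \<le> hy (2*m) (fst z) (snd z)"
      using continuous_attains_inf[OF cp False hc] by blast
    have "snd z0 \<noteq> fst z0" using z0(1) assms(2) unfolding C_def by auto
    then have pos: "0 < hy (2*m) (fst z0) (snd z0)" by (rule hy_pos[OF assms(1)])
    show ?thesis
      using pos z0(2) unfolding C_def by (intro exI[of _ "hy (2*m) (fst z0) (snd z0)"]) auto
  qed
qed

definition psum :: "nat \<Rightarrow> nat \<Rightarrow> (nat \<Rightarrow> real) \<Rightarrow> real" where
  "psum m n a = (\<Sum>i<n. a i ^ (2*m))"

lemma abs_powr_even: assumes "m \<ge> 1" shows "\<bar>x::real\<bar> powr real (2*m) = x ^ (2*m)"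
proof (cases "x = 0")
  case True then show ?thesis using assms by simp
next
  case False
  then have "\<bar>x\<bar> powr real (2*m) = \<bar>x\<bar> ^ (2*m)" by (intro powr_realpow) simp
  also have "\<dots> = x ^ (2*m)" by (simp add: power_even_abs)
  finally show ?thesis .
qed

lemma psum_nonneg: "0 \<le> psum m n a"
  unfolding psum_def by (intro sum_nonneg) (simp add: zero_le_even_power)

lemma lp_norm_psum: assumes "m \<ge> 1" shows "lp_norm (real (2*m)) n a = psum m n a powr (1 / real (2*m))"
  unfolding lp_norm_def psum_def using abs_powr_even[OF assms] by simp

lemma lp_norm_le1: assumes "m \<ge> 1" shows "lp_norm (real (2*m)) n a \<le> 1 \<longleftrightarrow> psum m n a \<le> 1"
proof -
  have e: "0 < 1 / real (2*m)" using assms by simp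
  have nn: "0 \<le> psum m n a" by (rule psum_nonneg)
  show ?thesis
  proof
    assume "psum m n a \<le> 1"
    then have "psum m n a powr (1 / real (2*m)) \<le> 1 powr (1 / real (2*m))"
      using nn e by (intro powr_mono2) auto
    then show "lp_norm (real (2*m)) n a \<le> 1" using lp_norm_psum[OF assms] by simp
  next
    assume h: "lp_norm (real (2*m)) n a \<le> 1"
    show "psum m n a \<le> 1"
    proof (rule ccontr)
      assume "\<not> psum m n a \<le> 1"
      then have "1 powr (1 / real (2*m)) < psum m n a powr (1 / real (2*m))"
        using e by (intro powr_less_mono2) auto
      then show False using h lp_norm_psum[OF assms] by simp
    qed
  qed
qed

lemma powr_inv_pow: assumes "m \<ge> 1" "0 \<le> X" shows "(X powr (1 / real (2*m))) ^ (2*m) = X"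
proof (cases "X = 0")
  case True then show ?thesis using assms by simp
next
  case False
  then have X0: "0 < X" using assms by simp
  have "(X powr (1 / real (2*m))) ^ (2*m) = (X powr (1 / real (2*m))) powr real (2*m)"
    using X0 by (rule powr_realpow[symmetric, OF powr_gt_zero[THEN iffD2], OF less_imp_neq[symmetric]])
  also have "\<dots> = X powr (1 / real (2*m) * real (2*m))" by (rule powr_powr)
  also have "1 / real (2*m) * real (2*m) = 1" using assms by simp
  finally show ?thesis using X0 by simp
qed

lemma psum_abs_le1: assumes "m \<ge> 1" "psum m n a \<le> 1" "i < n" shows "\<bar>a i\<bar> \<le> 1"
proof (rule ccontr)
  assume "\<not> \<bar>a i\<bar> \<le> 1"
  then have "1 < \<bar>a i\<bar> ^ (2*m)" using assms(1) by (intro one_less_power) auto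
  also have "\<dots> = a i ^ (2*m)" by (simp add: power_even_abs)
  also have "\<dots> \<le> psum m n a" unfolding psum_def using assms(3)
    by (intro member_le_sum) (auto simp: zero_le_even_power)
  finally show False using assms(2) by simp
qed

context fixes m n :: nat assumes m1: "m \<ge> 1" begin

lemma op_bdd: "bdd_above ((\<lambda>a. norm (\<Sum>i<n. a i *\<^sub>R (x i :: 'a::real_normed_vector))) ` {a. lp_norm (real (2*m)) n a \<le> 1})"
proof (rule bdd_aboveI2)
  fix a assume "a \<in> {a. lp_norm (real (2*m)) n a \<le> 1}"
  then have ps: "psum m n a \<le> 1" using lp_norm_le1[OF m1] by simp
  have "norm (\<Sum>i<n. a i *\<^sub>R x i) \<le> (\<Sum>i<n. norm (a i *\<^sub>R x i))" by (rule norm_sum)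
  also have "\<dots> \<le> (\<Sum>i<n. norm (x i))"
  proof (intro sum_mono)
    fix i assume "i \<in> {..<n}"
    then have "\<bar>a i\<bar> \<le> 1" using psum_abs_le1[OF m1 ps] by simp
    then show "norm (a i *\<^sub>R x i) \<le> norm (x i)" by (simp add: mult_left_le_one_le)
  qed
  finally show "norm (\<Sum>i<n. a i *\<^sub>R x i) \<le> (\<Sum>i<n. norm (x i))" .
qed

lemma op_upper: "psum m n a \<le> 1 \<Longrightarrow> norm (\<Sum>i<n. a i *\<^sub>R (x i :: 'a::real_normed_vector)) \<le> lp_opnorm (real (2*m)) n x"
  unfolding lp_opnorm_def by (rule cSUP_upper[OF _ op_bdd]) (simp only: mem_Collect_eq lp_norm_le1[OF m1])

lemma op_approx:
  assumes "V < lp_opnorm (real (2*m)) n (x :: nat \<Rightarrow> 'a::real_normed_vector)"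
  shows "\<exists>a. psum m n a \<le> 1 \<and> V < norm (\<Sum>i<n. a i *\<^sub>R x i)"
proof -
  have ne: "{a. lp_norm (real (2*m)) n a \<le> 1} \<noteq> {}"
  proof -
    have "psum m n (\<lambda>_. 0) \<le> 1" using m1 by (simp add: psum_def power_0_left)
    then have "(\<lambda>_. 0) \<in> {a. lp_norm (real (2*m)) n a \<le> 1}" by (simp only: mem_Collect_eq lp_norm_le1[OF m1])
    then show ?thesis by blast
  qed
  obtain a where "a \<in> {a. lp_norm (real (2*m)) n a \<le> 1}" "V < norm (\<Sum>i<n. a i *\<^sub>R x i)"
    using assms unfolding lp_opnorm_def less_cSUP_iff[OF ne op_bdd] by blast
  then show ?thesis by (simp only: mem_Collect_eq lp_norm_le1[OF m1]) blast
qed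

lemma op_cong: "(\<And>i. i < n \<Longrightarrow> x i = y i) \<Longrightarrow> lp_opnorm p n x = lp_opnorm p n y"
proof -
  assume h: "\<And>i. i < n \<Longrightarrow> x i = y i"
  have "\<And>a. (\<Sum>i<n. a i *\<^sub>R x i) = (\<Sum>i<n. a i *\<^sub>R y i)" using h by (intro sum.cong) auto
  then show ?thesis unfolding lp_opnorm_def by simp
qed

lemma op_nonneg: "0 \<le> lp_opnorm (real (2*m)) n (x :: nat \<Rightarrow> 'a::real_normed_vector)"
  using op_upper[of "\<lambda>_. 0" x] m1 by (simp add: psum_def power_0_left)

lemma op_homog:
  "norm (\<Sum>i<n. a i *\<^sub>R (x i :: 'a::real_normed_vector)) \<le> psum m n a powr (1 / real (2*m)) * lp_opnorm (real (2*m)) n x"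
proof (cases "psum m n a = 0")
  case True
  have "\<forall>i\<in>{..<n}. a i ^ (2*m) = 0"
    using True unfolding psum_def by (subst sum_nonneg_eq_0_iff[symmetric]) (auto simp: zero_le_even_power)
  then have "\<forall>i<n. a i = 0" by auto
  then show ?thesis using op_nonneg[of x] by simp
next
  case False
  define s where "s = psum m n a powr (1 / real (2*m))"
  have s0: "0 < s" using False psum_nonneg[of m n a] unfolding s_def by simp
  have sp: "s ^ (2*m) = psum m n a" unfolding s_def by (rule powr_inv_pow[OF m1 psum_nonneg])
  have "psum m n (\<lambda>i. a i / s) = psum m n a / s ^ (2*m)"
    unfolding psum_def by (simp add: power_divide sum_divide_distrib)
  then have "psum m n (\<lambda>i. a i / s) \<le> 1" using sp s0 False by simp
  then have "norm (\<Sum>i<n. (a i / s) *\<^sub>R x i) \<le> lp_opnorm (real (2*m)) n x" by (rule op_upper)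
  moreover have "(\<Sum>i<n. (a i / s) *\<^sub>R x i) = (1/s) *\<^sub>R (\<Sum>i<n. a i *\<^sub>R x i)"
    by (simp add: scaleR_sum_right)
  ultimately have "norm (\<Sum>i<n. a i *\<^sub>R x i) / s \<le> lp_opnorm (real (2*m)) n x" using s0 by simp
  then show ?thesis using s0 unfolding s_def[symmetric] by (simp add: field_simps)
qed

end

definition fu :: "nat \<Rightarrow> nat \<Rightarrow> (nat \<Rightarrow> real) \<Rightarrow> (nat \<Rightarrow> real) \<Rightarrow> real" where
  "fu m n u a = (\<Sum>i<n. u i ^ (2*m-1) * a i)"

lemma hy_sum:
  assumes "m \<ge> 1"
  shows "(\<Sum>i<n. hy (2*m) (u i) (a i)) = (real (2*m) - 1) / real (2*m) * psum m n u + psum m n a / real (2*m) - fu m n u a"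
  unfolding hy_def psum_def fu_def
  by (simp add: sum.distrib sum_subtractf sum_distrib_left sum_divide_distrib)

lemma young_sum:
  assumes "m \<ge> 1" "psum m n u = 1" "psum m n a \<le> 1"
  shows "(\<Sum>i<n. hy (2*m) (u i) (a i)) \<le> 1 - fu m n u a"
proof -
  have p: "real (2*m) > 0" using assms by simp
  have "psum m n a / real (2*m) \<le> 1 / real (2*m)" using assms(3) p by (simp add: divide_right_mono)
  then show ?thesis using hy_sum[OF assms(1), where n=n and u=u and a=a] assms(2) p by (simp add: diff_divide_distrib)
qed

lemma fu_le1:
  assumes "m \<ge> 1" "psum m n u = 1" "psum m n a \<le> 1"
  shows "fu m n u a \<le> 1"
proof -
  have "0 \<le> (\<Sum>i<n. hy (2*m) (u i) (a i))" by (intro sum_nonneg hy_nonneg[OF assms(1)])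
  then show ?thesis using young_sum[OF assms] by simp
qed

lemma psum_neg: "psum m n (\<lambda>i. - a i) = psum m n a"
  unfolding psum_def by simp

lemma fu_neg: "fu m n u (\<lambda>i. - a i) = - fu m n u a"
  unfolding fu_def by (simp add: sum_negf)

lemma fu_abs_le1:
  assumes "m \<ge> 1" "psum m n u = 1" "psum m n a \<le> 1"
  shows "\<bar>fu m n u a\<bar> \<le> 1"
  using fu_le1[OF assms] fu_le1[OF assms(1,2), of "\<lambda>i. - a i"] assms(3)
  by (simp add: psum_neg fu_neg)

lemma pin:
  assumes "m \<ge> 1" "\<rho> > 0"
  shows "\<exists>\<eta>>0. \<forall>u a. psum m n u = 1 \<longrightarrow> psum m n a \<le> 1 \<longrightarrow> 1 - \<eta> \<le> fu m n u a \<longrightarrow> (\<forall>i<n. \<bar>a i - u i\<bar> < \<rho>)"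
proof -
  obtain c where c: "c > 0" "\<forall>x t. \<bar>x\<bar> \<le> 1 \<longrightarrow> \<bar>t\<bar> \<le> 1 \<longrightarrow> \<rho> \<le> \<bar>t - x\<bar> \<longrightarrow> c \<le> hy (2*m) x t"
    using hy_unif[OF assms] by blast
  show ?thesis
  proof (intro exI[of _ "c/2"] conjI allI impI)
    show "0 < c/2" using c by simp
    fix u a i assume u: "psum m n u = 1" and a: "psum m n a \<le> 1" and f: "1 - c/2 \<le> fu m n u a" and i: "i < n"
    have s: "(\<Sum>i<n. hy (2*m) (u i) (a i)) \<le> c/2" using young_sum[OF assms(1) u a] f by simp
    have "hy (2*m) (u i) (a i) \<le> (\<Sum>i<n. hy (2*m) (u i) (a i))"
      using i by (intro member_le_sum) (auto intro: hy_nonneg[OF assms(1)])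
    then have hi: "hy (2*m) (u i) (a i) < c" using s c by simp
    have "\<bar>u i\<bar> \<le> 1" using psum_abs_le1[OF assms(1) _ i, of u] u by simp
    moreover have "\<bar>a i\<bar> \<le> 1" using psum_abs_le1[OF assms(1) a i] .
    ultimately show "\<bar>a i - u i\<bar> < \<rho>" using c(2) hi by force
  qed
qed

lemma unit_vec_norm:
  assumes m1: "m \<ge> 1" and i: "i < N" and g1: "lp_opnorm (real (2*m)) N g = 1"
  shows "norm (g i :: 'a::real_normed_vector) \<le> 1"
proof -
  have ps: "psum m N (\<lambda>j. if j = i then 1 else 0) = 1"
  proof -
    have "(\<Sum>j<N. (if j = i then 1 else 0::real) ^ (2*m)) = (\<Sum>j<N. if j = i then 1 else 0)"
      by (rule sum.cong) (use m1 in auto)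
    then show ?thesis unfolding psum_def using i by simp
  qed
  have "(\<Sum>j<N. (if j = i then 1 else 0) *\<^sub>R g j) = (\<Sum>j<N. if j = i then g j else 0)"
    by (rule sum.cong) auto
  also have "\<dots> = g i" using i by simp
  finally have "(\<Sum>j<N. (if j = i then 1 else 0) *\<^sub>R g j) = g i" .
  then show ?thesis using op_upper[OF m1 ps[THEN eq_refl], of g] g1 by simp
qed

lemma Gdiff_bound:
  assumes m1: "m \<ge> 1" and g1: "lp_opnorm (real (2*m)) N g = 1" and d: "\<forall>i<N. \<bar>b i\<bar> \<le> \<rho>"
  shows "norm (\<Sum>i<N. b i *\<^sub>R (g i :: 'a::real_normed_vector)) \<le> real N * \<rho>"
proof -
  have "norm (\<Sum>i<N. b i *\<^sub>R g i) \<le> (\<Sum>i<N. norm (b i *\<^sub>R g i))" by (rule norm_sum)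
  also have "\<dots> \<le> (\<Sum>i<N. \<rho>)"
  proof (intro sum_mono)
    fix i assume "i \<in> {..<N}"
    then have "\<bar>b i\<bar> \<le> \<rho>" "norm (g i) \<le> 1" using d unit_vec_norm[OF m1 _ g1, of i] by auto
    then show "norm (b i *\<^sub>R g i) \<le> \<rho>" by (metis abs_ge_zero mult_left_le order_trans norm_scaleR)
  qed
  finally show ?thesis by simp
qed

lemma key:
  fixes g :: "nat \<Rightarrow> 'a::real_normed_vector" and w :: 'a
  assumes m1: "m \<ge> 1" and g1: "lp_opnorm (real (2*m)) N g = 1"
    and oct: "\<And>\<phi> l. lp_opnorm (real (2*m)) N (\<lambda>i. \<phi> i *\<^sub>R w + l *\<^sub>R g i)
                   \<ge> (1 - \<delta>) * (lp_opnorm (real (2*m)) N (\<lambda>i. \<phi> i *\<^sub>R w) + \<bar>l\<bar>)"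
    and pinr: "\<forall>u a. psum m N u = 1 \<longrightarrow> psum m N a \<le> 1 \<longrightarrow> 1 - \<eta> \<le> fu m N u a \<longrightarrow> (\<forall>i<N. \<bar>a i - u i\<bar> < \<rho>)"
    and \<eta>0: "\<eta>0 > 0" and \<delta>: "\<delta> > 0" and \<delta>1: "\<delta> \<le> 1" and \<eta>: "2 * \<delta> * (1 + 1/\<eta>0) \<le> \<eta>"
    and u: "psum m N u = 1" and l: "l > 0" and wl: "norm w \<ge> \<eta>0 * l"
  shows "norm (w + l *\<^sub>R (\<Sum>i<N. u i *\<^sub>R g i)) \<ge> (1 - 4*\<delta> - real N * \<rho>) * (norm w + l)"
proof -
  define A where "A = norm w"
  define \<phi> where "\<phi> i = u i ^ (2*m-1)" for i
  have A0: "A > 0"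
  proof -
    have "0 < \<eta>0 * l" using \<eta>0 l by simp
    then show ?thesis using wl unfolding A_def by linarith
  qed
  have uu: "u i * \<phi> i = u i ^ (2*m)" for i
  proof -
    have "2*m = Suc (2*m-1)" using m1 by simp
    then show ?thesis unfolding \<phi>_def by (metis power_Suc)
  qed
  have "(\<Sum>i<N. u i *\<^sub>R (\<phi> i *\<^sub>R w)) = psum m N u *\<^sub>R w"
    unfolding psum_def scaleR_scaleR uu[symmetric] by (simp add: scaleR_sum_left)
  then have SA: "A \<le> lp_opnorm (real (2*m)) N (\<lambda>i. \<phi> i *\<^sub>R w)"
    using op_upper[OF m1 u[THEN eq_refl], of "\<lambda>i. \<phi> i *\<^sub>R w"] u unfolding A_def by simp
  have "(1 - 2*\<delta>) * (A + l) < (1 - \<delta>) * (A + l)" using \<delta> A0 l by (simp add: mult_strict_right_mono)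
  also have "\<dots> \<le> (1 - \<delta>) * (lp_opnorm (real (2*m)) N (\<lambda>i. \<phi> i *\<^sub>R w) + \<bar>l\<bar>)"
    using SA l \<delta>1 by (intro mult_left_mono) auto
  also have "\<dots> \<le> lp_opnorm (real (2*m)) N (\<lambda>i. \<phi> i *\<^sub>R w + l *\<^sub>R g i)" by (rule oct)
  finally have ch: "(1 - 2*\<delta>) * (A + l) < lp_opnorm (real (2*m)) N (\<lambda>i. \<phi> i *\<^sub>R w + l *\<^sub>R g i)" .
  obtain a0 where a0: "psum m N a0 \<le> 1"
    "(1 - 2*\<delta>) * (A + l) < norm (\<Sum>i<N. a0 i *\<^sub>R (\<phi> i *\<^sub>R w + l *\<^sub>R g i))"
    using op_approx[OF m1 ch] by blast
  have expand: "(\<Sum>i<N. a i *\<^sub>R (\<phi> i *\<^sub>R w + l *\<^sub>R g i)) = fu m N u a *\<^sub>R w + l *\<^sub>R (\<Sum>i<N. a i *\<^sub>R g i)" for a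
    unfolding fu_def \<phi>_def by (simp add: scaleR_add_right sum.distrib scaleR_sum_left scaleR_sum_right mult.commute)
  obtain a where a: "psum m N a \<le> 1" "0 \<le> fu m N u a"
    "(1 - 2*\<delta>) * (A + l) < norm (fu m N u a *\<^sub>R w + l *\<^sub>R (\<Sum>i<N. a i *\<^sub>R g i))"
  proof (cases "0 \<le> fu m N u a0")
    case True then show ?thesis using that a0 expand by simp
  next
    case False
    have e: "fu m N u (\<lambda>i. - a0 i) *\<^sub>R w + l *\<^sub>R (\<Sum>i<N. (- a0 i) *\<^sub>R g i)
        = - (fu m N u a0 *\<^sub>R w + l *\<^sub>R (\<Sum>i<N. a0 i *\<^sub>R g i))"
      by (simp add: fu_neg sum_negf)
    show ?thesis
    proof (rule that[of "\<lambda>i. - a0 i"])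
      show "psum m N (\<lambda>i. - a0 i) \<le> 1" using a0(1) by (simp add: psum_neg)
      show "0 \<le> fu m N u (\<lambda>i. - a0 i)" using False by (simp add: fu_neg)
      have "norm (fu m N u (\<lambda>i. - a0 i) *\<^sub>R w + l *\<^sub>R (\<Sum>i<N. (- a0 i) *\<^sub>R g i))
          = norm (fu m N u a0 *\<^sub>R w + l *\<^sub>R (\<Sum>i<N. a0 i *\<^sub>R g i))"
        by (simp only: e norm_minus_cancel)
      then show "(1 - 2*\<delta>) * (A + l) < norm (fu m N u (\<lambda>i. - a0 i) *\<^sub>R w + l *\<^sub>R (\<Sum>i<N. (- a0 i) *\<^sub>R g i))"
        using a0(2) expand[of a0] by simp
    qed
  qed
  define f where "f = fu m N u a"
  define Ga where "Ga = (\<Sum>i<N. a i *\<^sub>R g i)"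
  have f1: "f \<le> 1" unfolding f_def by (rule fu_le1[OF m1 u a(1)])
  have Ga1: "norm Ga \<le> 1" using op_upper[OF m1 a(1), of g] g1 unfolding Ga_def by simp
  have "norm (f *\<^sub>R w + l *\<^sub>R Ga) \<le> f * A + l"
  proof -
    have "norm (f *\<^sub>R w + l *\<^sub>R Ga) \<le> norm (f *\<^sub>R w) + norm (l *\<^sub>R Ga)" by (rule norm_triangle_ineq)
    also have "\<dots> = f * A + l * norm Ga" using a(2) l unfolding f_def A_def by simp
    also have "\<dots> \<le> f * A + l" using Ga1 l by (simp add: mult_left_le)
    finally show ?thesis .
  qed
  then have main: "(1 - 2*\<delta>) * (A + l) < f * A + l" using a(3) unfolding f_def Ga_def by simp
  then have "(1 - f) * A < 2 * \<delta> * (A + l)" by (simp add: algebra_simps)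
  also have "\<dots> \<le> 2 * \<delta> * (A + A / \<eta>0)"
  proof -
    have "l \<le> A / \<eta>0" using wl \<eta>0 unfolding A_def by (simp add: field_simps mult.commute)
    then show ?thesis using \<delta> by simp
  qed
  also have "\<dots> = (2 * \<delta> * (1 + 1/\<eta>0)) * A" by (simp add: algebra_simps)
  also have "\<dots> \<le> \<eta> * A" using \<eta> A0 by (simp add: mult_right_mono)
  finally have "1 - f < \<eta>" using A0 by simp
  then have pinned: "\<forall>i<N. \<bar>a i - u i\<bar> < \<rho>" using pinr u a(1) unfolding f_def by force
  have Gd: "norm (\<Sum>i<N. (u i - a i) *\<^sub>R g i) \<le> real N * \<rho>"
    using Gdiff_bound[OF m1 g1, of "\<lambda>i. u i - a i" \<rho>] pinned by (simp add: abs_minus_commute less_imp_le)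
  have decomp: "w + l *\<^sub>R (\<Sum>i<N. u i *\<^sub>R g i) = (f *\<^sub>R w + l *\<^sub>R Ga) + ((1 - f) *\<^sub>R w + l *\<^sub>R (\<Sum>i<N. (u i - a i) *\<^sub>R g i))"
    unfolding Ga_def by (simp add: algebra_simps scaleR_diff_left sum_subtractf)
  have "norm ((1 - f) *\<^sub>R w + l *\<^sub>R (\<Sum>i<N. (u i - a i) *\<^sub>R g i)) \<le> (1 - f) * A + l * (real N * \<rho>)"
  proof -
    have "norm ((1 - f) *\<^sub>R w + l *\<^sub>R (\<Sum>i<N. (u i - a i) *\<^sub>R g i))
       \<le> norm ((1 - f) *\<^sub>R w) + norm (l *\<^sub>R (\<Sum>i<N. (u i - a i) *\<^sub>R g i))" by (rule norm_triangle_ineq)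
    also have "\<dots> \<le> (1 - f) * A + l * (real N * \<rho>)"
      using f1 l Gd unfolding A_def by (simp add: mult_left_mono)
    finally show ?thesis .
  qed
  moreover have "(1 - 2*\<delta>) * (A + l) < norm (f *\<^sub>R w + l *\<^sub>R Ga)" using a(3) unfolding f_def Ga_def .
  moreover have "(1 - f) * A \<le> 2 * \<delta> * (A + l)" using main by (simp add: algebra_simps)
  moreover have "norm (f *\<^sub>R w + l *\<^sub>R Ga) - norm ((1 - f) *\<^sub>R w + l *\<^sub>R (\<Sum>i<N. (u i - a i) *\<^sub>R g i))
      \<le> norm (w + l *\<^sub>R (\<Sum>i<N. u i *\<^sub>R g i))"
    unfolding decomp by (rule norm_diff_ineq[THEN order_trans]) (simp add: norm_minus_commute)
  moreover have "l * (real N * \<rho>) \<le> (A + l) * (real N * \<rho>)"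
  proof -
    have "0 \<le> real N * \<rho>" using Gd norm_ge_zero order_trans by blast
    then show ?thesis using A0 by (simp add: mult_right_mono)
  qed
  ultimately show ?thesis unfolding A_def[symmetric] by (simp add: algebra_simps)
qed

lemma E_repr:
  fixes b :: "nat \<Rightarrow> 'a::real_vector"
  assumes N: "0 < N" and i: "i < N"
  shows "(\<Sum>q<M*N. (\<phi> (q mod N) * d (q div N)) *\<^sub>R (if i = q mod N then b (q div N) else 0))
         = \<phi> i *\<^sub>R (\<Sum>j<M. d j *\<^sub>R b j)"
proof -
  define F where "F q = (\<phi> (q mod N) * d (q div N)) *\<^sub>R (if i = q mod N then b (q div N) else 0)" for q
  have "(\<Sum>q<M*N. F q) = (\<Sum>j<M. sum F {j*N..<j*N+N})" by (rule sum.nat_group[symmetric])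
  also have "\<dots> = (\<Sum>j<M. (\<phi> i * d j) *\<^sub>R b j)"
  proof (rule sum.cong[OF refl])
    fix j
    have "sum F {j*N..<j*N+N} = sum F {0 + j*N..<N + j*N}" by (simp add: add.commute)
    also have "\<dots> = (\<Sum>r=0..<N. F (r + j*N))" by (rule sum.shift_bounds_nat_ivl)
    also have "\<dots> = (\<Sum>r=0..<N. if r = i then (\<phi> i * d j) *\<^sub>R b j else 0)"
    proof (rule sum.cong[OF refl])
      fix r assume "r \<in> {0..<N}"
      then have "(r + j*N) mod N = r" "(r + j*N) div N = j" using N by auto
      then show "F (r + j*N) = (if r = i then (\<phi> i * d j) *\<^sub>R b j else 0)" unfolding F_def by auto
    qed
    also have "\<dots> = (\<phi> i * d j) *\<^sub>R b j" using i by simp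
    finally show "sum F {j*N..<j*N+N} = (\<phi> i * d j) *\<^sub>R b j" .
  qed
  also have "\<dots> = \<phi> i *\<^sub>R (\<Sum>j<M. d j *\<^sub>R b j)" by (simp add: scaleR_sum_right)
  finally show ?thesis unfolding F_def .
qed

lemma linf_ge: "\<bar>y $ i\<bar> \<le> linf_norm (y :: real ^ 'n::finite)"
  unfolding linf_norm_def by (rule Max_ge) auto

lemma linf_ex: "\<exists>i. linf_norm (y :: real ^ 'n::finite) = \<bar>y $ i\<bar>"
proof -
  have "linf_norm y \<in> range (\<lambda>i. \<bar>y $ i\<bar>)" unfolding linf_norm_def by (rule Max_in) auto
  then show ?thesis by auto
qed

lemma arith1:
  fixes e A l Mx X k :: real
  assumes "0 < e" "e < 1" "0 \<le> A" "0 \<le> l" "Mx \<le> (1 + e/8) * l" "(1 - k) * (A + l) \<le> X" "k \<le> e/8"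
  shows "(1 - e) * (A + Mx) \<le> X"
proof -
  have f1: "(1 - e) * Mx \<le> (1 - e) * ((1 + e/8) * l)" using assms by (intro mult_left_mono) auto
  have f2: "k * (A + l) \<le> e/8 * (A + l)" using assms by (intro mult_right_mono) auto
  have n: "e * (e * l) \<ge> 0" "e * l \<ge> 0" "e * A \<ge> 0" using assms by simp_all
  have q1: "(1-e)*(A+Mx) = A - e*A + (1-e)*Mx" by (simp add: algebra_simps)
  have q2: "(1 - e) * ((1 + e/8) * l) = l - 7/8*(e*l) - 1/8*(e*(e*l))" by (simp add: field_simps)
  have q3: "(1-k)*(A+l) = A + l - k*(A+l)" by (simp add: algebra_simps)
  have q4: "e/8*(A+l) = 1/8*(e*A) + 1/8*(e*l)" by (simp add: algebra_simps)
  show ?thesis using f1 f2 n q1 q2 q3 q4 assms(6) by argo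
qed

lemma arith2:
  fixes e A l Mx X k :: real
  assumes "0 < e" "e < 1" "0 \<le> A" "0 \<le> l" "Mx \<le> (1 + e/8) * l" "(1 - 2*k) * l - A \<le> X" "k \<le> e/8"
    "A < e/8 * l"
  shows "(1 - e) * (A + Mx) \<le> X"
proof -
  have f1: "(1 - e) * Mx \<le> (1 - e) * ((1 + e/8) * l)" using assms by (intro mult_left_mono) auto
  have f2: "k * l \<le> e/8 * l" using assms by (intro mult_right_mono) auto
  have n: "e * (e * l) \<ge> 0" "e * l \<ge> 0" "e * A \<ge> 0" using assms by simp_all
  have q1: "(1-e)*(A+Mx) = A - e*A + (1-e)*Mx" by (simp add: algebra_simps)
  have q2: "(1 - e) * ((1 + e/8) * l) = l - 7/8*(e*l) - 1/8*(e*(e*l))" by (simp add: field_simps)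
  have q3: "(1-2*k)*l - A = l - 2*(k*l) - A" by (simp add: algebra_simps)
  have q4: "e/8*l = 1/8*(e*l)" by (simp add: algebra_simps)
  show ?thesis using f1 f2 n q1 q2 q3 q4 assms(6,8) by argo
qed

lemma pow_le_base: assumes "m \<ge> 1" "(a::real) ^ (2*m) \<le> b ^ (2*m)" "0 \<le> b" shows "a \<le> b"
proof -
  have "2*m = Suc (2*m-1)" using assms by simp
  then show ?thesis using assms power_le_imp_le_base by metis
qed

lemma exists_nonzero:
  assumes oct: "octahedral_Lp TYPE('a::real_normed_vector) (real (2*1)) 1"
  shows "\<exists>x0::'a. x0 \<noteq> 0"
proof (rule ccontr)
  assume "\<not> (\<exists>x0::'a. x0 \<noteq> 0)"
  then have all0: "\<And>x::'a. x = 0" by blast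
  obtain y :: "nat \<Rightarrow> 'a" where y: "lp_opnorm (real (2*1)) 1 y = 1"
    using oct unfolding octahedral_Lp_def by (metis less_numeral_extra(1) not_less_zero)
  have ne: "{a. lp_norm (real (2*1)) 1 a \<le> 1} \<noteq> {}"
  proof -
    have "psum 1 1 (\<lambda>_. 0) \<le> 1" by (simp add: psum_def)
    then have "(\<lambda>_. 0) \<in> {a. lp_norm (real (2*1)) 1 a \<le> 1}" by (simp only: mem_Collect_eq lp_norm_le1[OF order_refl])
    then show ?thesis by blast
  qed
  have "lp_opnorm (real (2*1)) 1 y = 0"
    unfolding lp_opnorm_def using all0[of "y _"] ne by (simp add: all0[of "y 0"])
  then show False using y by simp
qed

lemma choose_m:
  assumes "\<theta> > 0"
  shows "\<exists>m\<ge>1. real N \<le> (1 + \<theta>) ^ (2*m)"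
proof -
  define m where "m = nat \<lceil>real N / \<theta>\<rceil> + 1"
  have "real N / \<theta> \<le> real m" unfolding m_def by linarith
  then have "real N \<le> real m * \<theta>" using assms by (simp add: field_simps)
  also have "\<dots> \<le> real (2*m) * \<theta>" using assms by (intro mult_right_mono) auto
  also have "\<dots> \<le> 1 + real (2*m) * \<theta>" by simp
  also have "\<dots> \<le> (1 + \<theta>) ^ (2*m)" using assms by (intro Bernoulli_inequality) simp
  finally show ?thesis unfolding m_def by (intro exI[of _ "nat \<lceil>real N / \<theta>\<rceil> + 1"]) auto
qed

theorem theorem3p4:
  fixes Z :: "'a::banach set" and \<epsilon> :: real
  assumes oct: "\<And>(n::nat) (p::real). n \<ge> 1 \<Longrightarrow> 1 < p \<Longrightarrow> octahedral_Lp TYPE('a) p n"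
    and eps: "\<epsilon> > 0"
    and Zsub: "subspace Z"
    and Zfin: "\<exists>B. finite B \<and> span B = Z"
  shows "\<exists>T :: real ^ 'n::finite \<Rightarrow> 'a. linear T \<and> (\<forall>y. norm (T y) \<le> linf_norm y) \<and>
           (\<forall>y. \<forall>z\<in>Z. norm (z + T y) \<ge> (1 - \<epsilon>) * (norm z + linf_norm y))"
proof (cases "\<epsilon> \<ge> 1")
  case True
  have l0: "0 \<le> linf_norm (y :: real ^ 'n)" for y using linf_ge[of y] abs_ge_zero order_trans by blast
  show ?thesis
  proof (intro exI[of _ "\<lambda>y. 0"] conjI allI ballI)
    show "linear (\<lambda>y::real^'n. 0::'a)" by (rule linearI) auto
    show "norm (0::'a) \<le> linf_norm y" for y :: "real^'n" using l0 by simp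
    fix y :: "real^'n" and z assume "z \<in> Z"
    have "(1 - \<epsilon>) * (norm z + linf_norm y) \<le> 0" using True l0[of y] by (intro mult_nonpos_nonneg) auto
    then show "(1 - \<epsilon>) * (norm z + linf_norm y) \<le> norm (z + 0)" by (smt (verit) norm_ge_zero)
  qed
next
  case False
  then have e1: "\<epsilon> < 1" by simp
  define N where "N = CARD('n)"
  have N0: "0 < N" unfolding N_def by simp
  obtain \<iota> :: "nat \<Rightarrow> 'n" where \<iota>: "bij_betw \<iota> {0..<N} UNIV"
    using ex_bij_betw_nat_finite[of "UNIV :: 'n set"] unfolding N_def by auto
  obtain x0 :: 'a where x0: "x0 \<noteq> 0" using exists_nonzero[OF oct] by fastforce
  obtain Bf where Bf: "finite Bf" "span Bf = Z" using Zfin by blast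
  define F where "F = insert x0 Bf"
  have Ffin: "finite F" unfolding F_def using Bf by simp
  define M where "M = card F"
  obtain b :: "nat \<Rightarrow> 'a" where b: "bij_betw b {0..<M} F"
    using ex_bij_betw_nat_finite[OF Ffin] unfolding M_def by auto
  have repr: "\<exists>d. w = (\<Sum>j<M. d j *\<^sub>R b j)" if wF: "w \<in> span F" for w
  proof -
    obtain c where "w = (\<Sum>v\<in>F. c v *\<^sub>R v)" using wF span_finite[OF Ffin] by auto
    also have "\<dots> = (\<Sum>j\<in>{0..<M}. c (b j) *\<^sub>R b j)" by (rule sum.reindex_bij_betw[OF b, symmetric])
    finally show ?thesis by (intro exI[of _ "\<lambda>j. c (b j)"]) (simp add: atLeast0LessThan)
  qed
  have ZF: "Z \<subseteq> span F" unfolding F_def using Bf(2) span_mono[of Bf "insert x0 Bf"] by auto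
  have x0F: "x0 \<in> span F" unfolding F_def by (simp add: span_base)
  define \<theta> where "\<theta> = \<epsilon> / 8"
  have \<theta>0: "\<theta> > 0" unfolding \<theta>_def using eps by simp
  obtain m where m1: "m \<ge> 1" and mN: "real N \<le> (1 + \<theta>) ^ (2*m)" using choose_m[OF \<theta>0] by blast
  define \<rho> where "\<rho> = \<epsilon> / (16 * real N)"
  have \<rho>0: "\<rho> > 0" unfolding \<rho>_def using eps N0 by simp
  have N\<rho>: "real N * \<rho> = \<epsilon> / 16" unfolding \<rho>_def using N0 by simp
  obtain \<eta> where \<eta>0: "\<eta> > 0" and pinr: "\<forall>u a. psum m N u = 1 \<longrightarrow> psum m N a \<le> 1 \<longrightarrow> 1 - \<eta> \<le> fu m N u a \<longrightarrow> (\<forall>i<N. \<bar>a i - u i\<bar> < \<rho>)"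
    using pin[OF m1 \<rho>0, of N] by blast
  define \<eta>0 where "\<eta>0 = \<epsilon> / 8"
  have \<eta>00: "\<eta>0 > 0" "\<eta>0 \<le> 1" unfolding \<eta>0_def using eps e1 by auto
  define \<delta> where "\<delta> = min (\<epsilon> / 64) (\<eta> / (2 * (1 + 1/\<eta>0)))"
  have \<delta>0: "\<delta> > 0"
  proof -
    have "0 < 2 * (1 + 1/\<eta>0)" by (intro mult_pos_pos add_pos_pos) (use \<eta>00 in simp_all)
    then have "0 < \<eta> / (2 * (1 + 1/\<eta>0))" using \<eta>0 by (rule divide_pos_pos[rotated])
    then show ?thesis unfolding \<delta>_def using eps by simp
  qed
  have \<delta>1: "\<delta> \<le> 1" unfolding \<delta>_def using e1 by simp
  have \<delta>\<eta>: "2 * \<delta> * (1 + 1/\<eta>0) \<le> \<eta>"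
  proof -
    have p: "0 < 2 * (1 + 1/\<eta>0)" by (intro mult_pos_pos add_pos_pos) (use \<eta>00 in simp_all)
    have "\<delta> \<le> \<eta> / (2 * (1 + 1/\<eta>0))" unfolding \<delta>_def by simp
    then have "\<delta> * (2 * (1 + 1/\<eta>0)) \<le> \<eta>" using p by (simp add: pos_le_divide_eq)
    then show ?thesis by (simp add: algebra_simps)
  qed
  define \<kappa> where "\<kappa> = 4 * \<delta> + real N * \<rho>"
  have \<kappa>: "\<kappa> \<le> \<epsilon> / 8" unfolding \<kappa>_def N\<rho> using \<delta>_def by simp
  define P where "P = real (2*m)"
  have P1: "1 < P" unfolding P_def using m1 by simp
  define k where "k = M * N"
  define B where "B q i = (if i = q mod N then b (q div N) else 0)" for q i
  have BL: "\<forall>j<k. B j \<in> Lspace N"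
  proof (intro allI impI)
    fix j assume "j < k"
    have "\<forall>i\<ge>N. B j i = 0" unfolding B_def using mod_less_divisor[OF N0, of j] by auto
    then show "B j \<in> Lspace N" unfolding Lspace_def by simp
  qed
  obtain g where gL: "g \<in> Lspace N" and g1: "lp_opnorm P N g = 1"
    and goct: "\<forall>(c :: nat \<Rightarrow> real) (l::real).
              lp_opnorm P N (\<lambda>i. (\<Sum>j<k. c j *\<^sub>R B j i) + l *\<^sub>R g i)
                \<ge> (1 - \<delta>) * (lp_opnorm P N (\<lambda>i. \<Sum>j<k. c j *\<^sub>R B j i) + \<bar>l\<bar>)"
  proof -
    have oN: "octahedral_Lp TYPE('a) P N" by (rule oct) (use N0 P1 in auto)
    have pre: "\<delta> > 0 \<and> (\<forall>j<k. B j \<in> Lspace N)" using \<delta>0 BL by blast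
    show ?thesis
      using mp[OF oN[unfolded octahedral_Lp_def, THEN spec[of _ k], THEN spec[of _ B], THEN spec[of _ \<delta>]] pre] that
      by blast
  qed
  have octw: "lp_opnorm P N (\<lambda>i. \<phi> i *\<^sub>R w + l *\<^sub>R g i) \<ge> (1 - \<delta>) * (lp_opnorm P N (\<lambda>i. \<phi> i *\<^sub>R w) + \<bar>l\<bar>)"
    if wF: "w \<in> span F" for w \<phi> l
  proof -
    obtain d where d: "w = (\<Sum>j<M. d j *\<^sub>R b j)" using repr[OF wF] by blast
    define c where "c q = \<phi> (q mod N) * d (q div N)" for q
    have e: "(\<Sum>j<k. c j *\<^sub>R B j i) = \<phi> i *\<^sub>R w" if "i < N" for i
      unfolding c_def B_def k_def d using E_repr[OF N0 that, where M=M and \<phi>=\<phi> and d=d and b=b] by simp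
    have "lp_opnorm P N (\<lambda>i. (\<Sum>j<k. c j *\<^sub>R B j i) + l *\<^sub>R g i) = lp_opnorm P N (\<lambda>i. \<phi> i *\<^sub>R w + l *\<^sub>R g i)"
      using e by (intro op_cong[OF m1]) auto
    moreover have "lp_opnorm P N (\<lambda>i. \<Sum>j<k. c j *\<^sub>R B j i) = lp_opnorm P N (\<lambda>i. \<phi> i *\<^sub>R w)"
      using e by (intro op_cong[OF m1]) auto
    ultimately show ?thesis using goct[rule_format, of c l] by simp
  qed
  have keyw: "norm (w + l *\<^sub>R (\<Sum>i<N. u i *\<^sub>R g i)) \<ge> (1 - \<kappa>) * (norm w + l)"
    if wF: "w \<in> span F" and u: "psum m N u = 1" and l: "l > 0" and wl: "norm w \<ge> \<eta>0 * l" for w u l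
    unfolding \<kappa>_def diff_diff_eq[symmetric]
    by (rule key[OF m1 g1[unfolded P_def] octw[OF wF, unfolded P_def] pinr \<eta>00(1) \<delta>0 \<delta>1 \<delta>\<eta> u l wl])
  define r where "r = real N powr (1 / real (2*m))"
  have r0: "r > 0" using N0 by (simp add: r_def)
  have rp: "r ^ (2*m) = real N" unfolding r_def by (rule powr_inv_pow[OF m1]) simp
  have r\<theta>: "r \<le> 1 + \<theta>" by (rule pow_le_base[OF m1]) (use rp mN \<theta>0 in auto)
  define T where "T y = (1/r) *\<^sub>R (\<Sum>i<N. (y $ \<iota> i) *\<^sub>R g i)" for y :: "real^'n"
  have linT: "linear T"
  proof (rule linearI)
    fix y1 y2 :: "real^'n"
    show "T (y1 + y2) = T y1 + T y2"
      unfolding T_def by (simp add: scaleR_add_left sum.distrib scaleR_add_right)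
  next
    fix c :: real and y :: "real^'n"
    show "T (c *\<^sub>R y) = c *\<^sub>R T y"
      unfolding T_def by (simp add: scaleR_sum_right)
  qed
  have surj\<iota>: "\<exists>i<N. \<iota> i = j" for j
    using \<iota> unfolding bij_betw_def by (metis UNIV_I atLeastLessThan_iff imageE)
  have tbounds: "linf_norm y \<le> psum m N (\<lambda>i. y $ \<iota> i) powr (1 / real (2*m)) \<and>
                 psum m N (\<lambda>i. y $ \<iota> i) powr (1 / real (2*m)) \<le> r * linf_norm y" for y :: "real^'n"
  proof -
    define t where "t = psum m N (\<lambda>i. y $ \<iota> i) powr (1 / real (2*m))"
    define Mx where "Mx = linf_norm y"
    have t0: "0 \<le> t" unfolding t_def by simp
    have tp: "t ^ (2*m) = psum m N (\<lambda>i. y $ \<iota> i)" unfolding t_def by (rule powr_inv_pow[OF m1 psum_nonneg])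
    have M0: "0 \<le> Mx" unfolding Mx_def using linf_ge[of y] abs_ge_zero order_trans by blast
    obtain j where j: "Mx = \<bar>y $ j\<bar>" unfolding Mx_def using linf_ex by blast
    obtain i0 where i0: "i0 < N" "\<iota> i0 = j" using surj\<iota> by blast
    have "Mx ^ (2*m) = (y $ \<iota> i0) ^ (2*m)" using j i0 by (simp add: power_even_abs)
    also have "\<dots> \<le> psum m N (\<lambda>i. y $ \<iota> i)" unfolding psum_def using i0
      by (intro member_le_sum) (auto simp: zero_le_even_power)
    finally have a: "Mx \<le> t" using tp t0 pow_le_base[OF m1] by simp
    have "psum m N (\<lambda>i. y $ \<iota> i) \<le> real (card {..<N}) * Mx ^ (2*m)"
      unfolding psum_def
    proof (rule sum_bounded_above)
      fix i
      have "\<bar>y $ \<iota> i\<bar> \<le> Mx" unfolding Mx_def by (rule linf_ge)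
      then have "\<bar>y $ \<iota> i\<bar> ^ (2*m) \<le> Mx ^ (2*m)" by (intro power_mono) auto
      then show "(y $ \<iota> i) ^ (2*m) \<le> Mx ^ (2*m)" by (simp add: power_even_abs)
    qed
    also have "\<dots> = (r * Mx) ^ (2*m)" using rp by (simp add: power_mult_distrib)
    finally have "t \<le> r * Mx" using tp r0 M0 pow_le_base[OF m1] by simp
    then show ?thesis using a unfolding t_def Mx_def by simp
  qed
  have normT: "norm (T y) \<le> linf_norm y" for y :: "real^'n"
  proof -
    define t where "t = psum m N (\<lambda>i. y $ \<iota> i) powr (1 / real (2*m))"
    have "norm (\<Sum>i<N. (y $ \<iota> i) *\<^sub>R g i) \<le> t * 1"
      using op_homog[OF m1, where n=N and a="\<lambda>i. y $ \<iota> i" and x=g] g1 unfolding t_def P_def by simp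
    also have "\<dots> \<le> r * linf_norm y" using tbounds[of y] unfolding t_def by simp
    finally show "norm (T y) \<le> linf_norm y" unfolding T_def using r0 by (simp add: field_simps)
  qed
  show ?thesis
  proof (intro exI[of _ T] conjI allI ballI)
    show "linear T" by (rule linT)
  next
    fix y :: "real^'n"
    show "norm (T y) \<le> linf_norm y" by (rule normT)
  next
    fix y :: "real^'n" and z assume zZ: "z \<in> Z"
    define wv where "wv i = y $ \<iota> i" for i
    define t where "t = psum m N wv powr (1 / real (2*m))"
    define A where "A = norm z"
    define Mx where "Mx = linf_norm y"
    have A0: "0 \<le> A" unfolding A_def by simp
    have M0: "0 \<le> Mx" unfolding Mx_def using linf_ge[of y] abs_ge_zero order_trans by blast
    have tb: "Mx \<le> t" "t \<le> r * Mx" using tbounds[of y] unfolding t_def Mx_def wv_def by auto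
    have t0: "0 \<le> t" unfolding t_def by simp
    show "(1 - \<epsilon>) * (norm z + linf_norm y) \<le> norm (z + T y)"
    proof (cases "t = 0")
      case True
      then have "Mx = 0" using tb M0 by simp
      have "norm (T y) \<le> linf_norm y" by (rule normT)
      then have "T y = 0" using \<open>Mx = 0\<close> unfolding Mx_def by simp
      then show ?thesis using \<open>Mx = 0\<close> e1 eps A0 unfolding Mx_def A_def
        by (simp add: mult_left_le_one_le)
    next
      case False
      then have tpos: "t > 0" using t0 by simp
      have tp: "t ^ (2*m) = psum m N wv" unfolding t_def by (rule powr_inv_pow[OF m1 psum_nonneg])
      define u where "u i = wv i / t" for i
      have pu: "psum m N u = 1"
      proof -
        have "psum m N u = psum m N wv / t ^ (2*m)"
          unfolding psum_def u_def by (simp add: power_divide sum_divide_distrib)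
        moreover have "0 < t ^ (2*m)" using tpos by simp
        ultimately show ?thesis using tp by simp
      qed
      define lam where "lam = t / r"
      have lam0: "lam > 0" unfolding lam_def using tpos r0 by simp
      define Gu where "Gu = (\<Sum>i<N. u i *\<^sub>R g i)"
      have Ty: "T y = lam *\<^sub>R Gu"
      proof -
        have "(\<Sum>i<N. (y $ \<iota> i) *\<^sub>R g i) = t *\<^sub>R Gu"
          unfolding Gu_def u_def wv_def scaleR_sum_right using tpos by (intro sum.cong) auto
        then show ?thesis unfolding T_def lam_def by (simp add: divide_inverse mult.commute)
      qed
      have Ml: "Mx \<le> (1 + \<epsilon>/8) * lam"
      proof -
        have "t = r * lam" unfolding lam_def using r0 by simp
        also have "\<dots> \<le> (1 + \<theta>) * lam" using r\<theta> lam0 by (intro mult_right_mono) auto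
        finally show ?thesis using tb(1) unfolding \<theta>_def by simp
      qed
      show ?thesis
      proof (cases "\<eta>0 * lam \<le> A")
        case True
        have "(1 - \<kappa>) * (A + lam) \<le> norm (z + lam *\<^sub>R Gu)"
          unfolding A_def Gu_def by (rule keyw[OF subsetD[OF ZF zZ] pu lam0 True[unfolded A_def]])
        then show ?thesis unfolding Ty A_def[symmetric] Mx_def[symmetric]
          using arith1[OF eps e1 A0 less_imp_le[OF lam0] Ml _ \<kappa>] by blast
      next
        case False
        define w where "w = (lam / norm x0) *\<^sub>R x0"
        have wF: "w \<in> span F" unfolding w_def by (rule span_mul[OF x0F])
        have nw: "norm w = lam" unfolding w_def using x0 lam0 by simp
        have "\<eta>0 * lam \<le> norm w" using nw \<eta>00 lam0 by (simp add: mult_left_le_one_le)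
        from keyw[OF wF pu lam0 this] have "(1 - \<kappa>) * (lam + lam) \<le> norm (w + lam *\<^sub>R Gu)"
          unfolding nw Gu_def .
        also have "\<dots> \<le> lam + norm (lam *\<^sub>R Gu)" using norm_triangle_ineq[of w "lam *\<^sub>R Gu"] nw by simp
        finally have g2: "(1 - 2*\<kappa>) * lam \<le> norm (lam *\<^sub>R Gu)" by (simp add: algebra_simps)
        have "norm (lam *\<^sub>R Gu) - A \<le> norm (z + lam *\<^sub>R Gu)"
          using norm_diff_ineq[of "lam *\<^sub>R Gu" z] unfolding A_def by (simp add: add.commute)
        with g2 have "(1 - 2*\<kappa>) * lam - A \<le> norm (z + lam *\<^sub>R Gu)" by simp
        moreover have "A < \<epsilon>/8 * lam" using False unfolding \<eta>0_def by simp
        ultimately show ?thesis unfolding Ty A_def[symmetric] Mx_def[symmetric]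
          using arith2[OF eps e1 A0 less_imp_le[OF lam0] Ml _ \<kappa>] by blast
      qed
    qed
  qed
qed

end
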